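(* For any $d\ge1$ and $j\in[d]$, the function $f:\mathbb R^d\to\mathbb R$, $f(\zeta)=\mathrm{smax}(\zeta)_j=e^{\zeta_j}/\sum_{i=1}^de^{\zeta_i}$, is real-analytic of $(1/(2e^2),1)$-type (constant functions).
   Context: Let $U\subseteq\mathbb R^d$ be open and $\tau_1,\tau_2:U\to\mathbb R_{>0}$. A real-analytic $f:U\to\mathbb R$ has $(\tau_1,\tau_2)$-type if for every $\zeta_0\in U$, writing the power series of $f$ at $\zeta_0$ as $\sum_\mu a_{\zeta_0,\mu}(\zeta-\zeta_0)^\mu$ (over multi-indices $\mu$), for every $\zeta$ with $\|\zeta-\zeta_0\|_\infty\le\tau_1(\zeta_0)$ the series converges absolutely and $\sum_{\mu:|\mu|\ge1}|a_{\zeta_0,\mu}|\,|\zeta-\zeta_0|^\mu\le\tau_2(\zeta_0)$, where $|\zeta-\zeta_0|^\mu=\prod_i|\zeta_i-\zeta_{0,i}|^{\mu_i}$. *)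

theory Defs
  imports "HOL-Analysis.Analysis"
begin

text \<open>Points of R^d are vectors of type real^'n with d = CARD('n).
  Multi-indices are functions 'n => nat.\<close>

definition mono_pow :: "real^'n \<Rightarrow> ('n::finite \<Rightarrow> nat) \<Rightarrow> real" where
  "mono_pow x \<mu> = (\<Prod>i\<in>UNIV. (x$i) ^ (\<mu> i))"

definition mi_deg :: "('n::finite \<Rightarrow> nat) \<Rightarrow> nat" where
  "mi_deg \<mu> = (\<Sum>i\<in>UNIV. \<mu> i)"

text \<open>a is the (multivariate) power series of f at z0: it converges absolutely to f
  on a neighbourhood of z0 (unordered sums of reals are absolute sums).\<close>
definition power_series_at ::
  "(real^'n \<Rightarrow> real) \<Rightarrow> real^'n \<Rightarrow> (('n::finite \<Rightarrow> nat) \<Rightarrow> real) \<Rightarrow> bool" where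
  "power_series_at f z0 a \<longleftrightarrow>
     (\<exists>r>0. \<forall>z. (\<forall>i. \<bar>z$i - z0$i\<bar> < r) \<longrightarrow>
        ((\<lambda>\<mu>. a \<mu> * mono_pow (z - z0) \<mu>) has_sum f z) UNIV)"

definition real_analytic_on_vec :: "(real^'n::finite) set \<Rightarrow> (real^'n \<Rightarrow> real) \<Rightarrow> bool" where
  "real_analytic_on_vec U f \<longleftrightarrow> (\<forall>z0\<in>U. \<exists>a. power_series_at f z0 a)"

definition has_analytic_type ::
  "(real^'n::finite) set \<Rightarrow> (real^'n \<Rightarrow> real) \<Rightarrow> (real^'n \<Rightarrow> real) \<Rightarrow> (real^'n \<Rightarrow> real) \<Rightarrow> bool" where
  "has_analytic_type U \<tau>1 \<tau>2 f \<longleftrightarrow>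
     real_analytic_on_vec U f \<and>
     (\<forall>z0\<in>U. \<forall>a. power_series_at f z0 a \<longrightarrow>
        (\<forall>z. (\<forall>i. \<bar>z$i - z0$i\<bar> \<le> \<tau>1 z0) \<longrightarrow>
           (\<lambda>\<mu>. \<bar>a \<mu>\<bar> * \<bar>mono_pow (z - z0) \<mu>\<bar>) summable_on UNIV \<and>
           (\<Sum>\<^sub>\<infinity>\<mu>\<in>{\<mu>. mi_deg \<mu> \<ge> 1}. \<bar>a \<mu>\<bar> * \<bar>mono_pow (z - z0) \<mu>\<bar>) \<le> \<tau>2 z0))"

definition smax :: "real^'n \<Rightarrow> 'n::finite \<Rightarrow> real" where
  "smax z j = exp (z$j) / (\<Sum>i\<in>UNIV. exp (z$i))"

end

theory Submission
  imports Defs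
begin


definition conv :: "(('n::finite \<Rightarrow> nat) \<Rightarrow> real) \<Rightarrow> (('n \<Rightarrow> nat) \<Rightarrow> real) \<Rightarrow> ('n \<Rightarrow> nat) \<Rightarrow> real" where
  "conv a b \<mu> = (\<Sum>\<nu>\<in>{\<nu>. \<forall>i. \<nu> i \<le> \<mu> i}. a \<nu> * b (\<lambda>i. \<mu> i - \<nu> i))"

lemma finite_below: "finite {\<nu>::'n::finite\<Rightarrow>nat. \<forall>i. \<nu> i \<le> \<mu> i}"
proof -
  have "{\<nu>::'n::finite\<Rightarrow>nat. \<forall>i. \<nu> i \<le> \<mu> i} = PiE UNIV (\<lambda>i. {..\<mu> i})"
    by (auto simp: PiE_def Pi_def)
  then show ?thesis by (simp add: finite_PiE)
qed

lemma mono_pow_zero[simp]: "mono_pow w (\<lambda>_. 0) = 1"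
  by (simp add: mono_pow_def)

lemma mono_pow_add: "mono_pow w (\<lambda>i. \<mu> i + \<nu> i) = mono_pow w \<mu> * mono_pow w \<nu>"
  by (simp add: mono_pow_def power_add prod.distrib)

definition absv :: "real^'n \<Rightarrow> real^'n" where "absv w = (\<chi> i. \<bar>w$i\<bar>)"

lemma mono_pow_abs: "\<bar>mono_pow w \<mu>\<bar> = mono_pow (absv w) \<mu>"
  by (simp add: mono_pow_def absv_def abs_prod power_abs)

lemma mono_pow_absv_nonneg: "mono_pow (absv w) \<mu> \<ge> 0"
  by (simp add: mono_pow_def absv_def prod_nonneg)

definition sng :: "'n \<Rightarrow> nat \<Rightarrow> ('n::finite \<Rightarrow> nat)" where
  "sng i k = (\<lambda>l. if l = i then k else 0)"

lemma mono_pow_sng: "mono_pow w (sng i k) = (w$i)^k"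
proof -
  have "mono_pow w (sng i k) = (\<Prod>l\<in>UNIV. if l = i then (w$i)^k else 1)"
    unfolding mono_pow_def sng_def by (rule prod.cong) auto
  also have "\<dots> = (w$i)^k" by (simp add: prod.delta)
  finally show ?thesis .
qed

lemma prod_abs_summable:
  fixes fa :: "'a \<Rightarrow> real" and fb :: "'b \<Rightarrow> real"
  assumes sa: "(\<lambda>x. norm (fa x)) summable_on UNIV" and sb: "(\<lambda>x. norm (fb x)) summable_on UNIV"
  shows "(\<lambda>(x,y). fa x * fb y) summable_on UNIV"
proof -
  define SB where "SB = infsum (\<lambda>x. norm (fb x)) UNIV"
  have "(\<lambda>p. norm ((\<lambda>(x,y). fa x * fb y) p)) summable_on Sigma UNIV (\<lambda>_. UNIV)"
  proof (rule summable_on_SigmaI[where g = "\<lambda>\<nu>. norm (fa \<nu>) * SB"])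
    fix x :: 'a
    have "((\<lambda>y. norm (fa x) * norm (fb y)) has_sum norm (fa x) * SB) UNIV"
      unfolding SB_def by (rule has_sum_cmult_right) (use sb in \<open>simp add: summable_iff_has_sum_infsum\<close>)
    then show "((\<lambda>y. norm ((\<lambda>(x,y). fa x * fb y) (x, y))) has_sum norm (fa x) * SB) UNIV"
      by (simp add: abs_mult)
  next
    show "(\<lambda>\<nu>. norm (fa \<nu>) * SB) summable_on UNIV"
      by (rule summable_on_cmult_left[OF sa])
  next
    show "\<And>x y. x \<in> UNIV \<Longrightarrow> y \<in> UNIV \<Longrightarrow> 0 \<le> norm ((\<lambda>(x,y). fa x * fb y) (x, y))" by simp
  qed
  then have "(\<lambda>p. norm ((\<lambda>(x,y). fa x * fb y) p)) summable_on UNIV"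
    by (simp only: UNIV_Times_UNIV)
  then show ?thesis
    by (rule summable_on_iff_abs_summable_on_real[THEN iffD2])
qed
lemma ser_conv:
  fixes a b :: "('n::finite \<Rightarrow> nat) \<Rightarrow> real"
  assumes ha: "((\<lambda>\<mu>. a \<mu> * mono_pow w \<mu>) has_sum A) UNIV"
      and hb: "((\<lambda>\<mu>. b \<mu> * mono_pow w \<mu>) has_sum B) UNIV"
  shows "((\<lambda>\<mu>. conv a b \<mu> * mono_pow w \<mu>) has_sum (A*B)) UNIV"
proof -
  define fa where "fa = (\<lambda>\<mu>. a \<mu> * mono_pow w \<mu>)"
  define fb where "fb = (\<lambda>\<mu>. b \<mu> * mono_pow w \<mu>)"
  define F where "F = (\<lambda>(\<nu>,\<kappa>). fa \<nu> * fb \<kappa>)"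
  have sa: "(\<lambda>x. norm (fa x)) summable_on UNIV"
    using ha unfolding fa_def summable_on_iff_abs_summable_on_real[symmetric] summable_on_def by blast
  have sb: "(\<lambda>x. norm (fb x)) summable_on UNIV"
    using hb unfolding fb_def summable_on_iff_abs_summable_on_real[symmetric] summable_on_def by blast
  have sF: "F summable_on UNIV"
    unfolding F_def by (rule prod_abs_summable[OF sa sb])
  have hF: "(F has_sum (A*B)) (Sigma UNIV (\<lambda>_. UNIV))"
  proof (rule has_sum_SigmaI[where g = "\<lambda>\<nu>. fa \<nu> * B"])
    fix \<nu> :: "'n \<Rightarrow> nat"
    show "((\<lambda>\<kappa>. F (\<nu>, \<kappa>)) has_sum fa \<nu> * B) UNIV"
      unfolding F_def using has_sum_cmult_right[OF hb[folded fb_def]] by simp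
  next
    show "((\<lambda>\<nu>. fa \<nu> * B) has_sum A * B) UNIV"
      using has_sum_cmult_left[OF ha[folded fa_def]] by simp
  next
    show "F summable_on Sigma UNIV (\<lambda>_. UNIV)" using sF by (simp only: UNIV_Times_UNIV)
  qed
  define D where "D = (\<lambda>\<mu>::'n\<Rightarrow>nat. {\<nu>. \<forall>i. \<nu> i \<le> \<mu> i})"
  define G where "G = (\<lambda>(\<mu>,\<nu>). a \<nu> * b (\<lambda>i. \<mu> i - \<nu> i) * mono_pow w \<mu>)"
  have "(F has_sum (A*B)) (Sigma UNIV (\<lambda>_. UNIV)) = (G has_sum (A*B)) (Sigma UNIV D)"
  proof (rule has_sum_reindex_bij_witness[where j = "\<lambda>(\<nu>,\<kappa>). ((\<lambda>i. \<nu> i + \<kappa> i), \<nu>)"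
        and i = "\<lambda>(\<mu>,\<nu>). (\<nu>, (\<lambda>i. \<mu> i - \<nu> i))"])
    fix x :: "('n\<Rightarrow>nat) \<times> ('n\<Rightarrow>nat)"
    obtain \<nu> \<kappa> where x: "x = (\<nu>,\<kappa>)" by (cases x)
    show "G ((\<lambda>(\<nu>, \<kappa>). (\<lambda>i. \<nu> i + \<kappa> i, \<nu>)) x) = F x"
      unfolding x G_def F_def fa_def fb_def by (simp add: mono_pow_add)
    show "(\<lambda>(\<mu>, \<nu>). (\<nu>, \<lambda>i. \<mu> i - \<nu> i)) ((\<lambda>(\<nu>, \<kappa>). (\<lambda>i. \<nu> i + \<kappa> i, \<nu>)) x) = x"
      unfolding x by simp
    show "(\<lambda>(\<nu>, \<kappa>). (\<lambda>i. \<nu> i + \<kappa> i, \<nu>)) x \<in> Sigma UNIV D"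
      unfolding x D_def by simp
  next
    fix x :: "('n\<Rightarrow>nat) \<times> ('n\<Rightarrow>nat)"
    assume "x \<in> Sigma UNIV D"
    then obtain \<mu> \<nu> where x: "x = (\<mu>,\<nu>)" "\<forall>i. \<nu> i \<le> \<mu> i" by (cases x) (auto simp: D_def)
    have "(\<lambda>i. \<nu> i + (\<mu> i - \<nu> i)) = \<mu>" using x(2) by (intro ext) simp
    then show "(\<lambda>(\<nu>, \<kappa>). (\<lambda>i. \<nu> i + \<kappa> i, \<nu>)) ((\<lambda>(\<mu>, \<nu>). (\<nu>, \<lambda>i. \<mu> i - \<nu> i)) x) = x"
      using x by simp
    show "(\<lambda>(\<mu>, \<nu>). (\<nu>, \<lambda>i. \<mu> i - \<nu> i)) x \<in> Sigma UNIV (\<lambda>_. UNIV)" by simp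
  qed simp
  with hF have hG: "(G has_sum (A*B)) (Sigma UNIV D)" by simp
  show ?thesis
  proof (rule has_sum_SigmaD[OF hG])
    fix \<mu> :: "'n \<Rightarrow> nat"
    show "((\<lambda>\<nu>. G (\<mu>, \<nu>)) has_sum conv a b \<mu> * mono_pow w \<mu>) (D \<mu>)"
      by (rule has_sum_finiteI) (auto simp: D_def finite_below G_def conv_def sum_distrib_right)
  qed
qed



lemma powser_unique0:
  fixes c :: "nat \<Rightarrow> real"
  assumes r: "r > 0" and h: "\<And>t. \<bar>t\<bar> < r \<Longrightarrow> ((\<lambda>n. c n * t^n) has_sum 0) UNIV"
  shows "c n = 0"
proof (induction n rule: less_induct)
  case (less m)
  define d where "d n = c (n + m)" for n
  have dsum: "(\<lambda>n. d n * t^n) sums 0" if t: "t \<noteq> 0" "norm t < r" for t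
  proof -
    have s: "(\<lambda>n. c n * t^n) sums 0" using h[of t] t has_sum_imp_sums by auto
    have z: "(\<Sum>i<m. c i * t^i) = 0" using less.IH by simp
    have "(\<lambda>n. c (n+m) * t^(n+m)) sums 0"
      using s sums_iff_shift[of "\<lambda>n. c n * t^n" m 0] z by simp
    then have "(\<lambda>n. (c (n+m) * t^(n+m)) * inverse (t^m)) sums (0 * inverse (t^m))"
      by (rule sums_mult2)
    moreover have "(c (n+m) * t^(n+m)) * inverse (t^m) = d n * t^n" for n
      using t by (simp add: d_def power_add field_simps)
    ultimately show ?thesis by simp
  qed
  have "((\<lambda>_. 0::real) \<longlongrightarrow> d 0) (at (0::real))"
    by (rule powser_limit_0_strong[OF r, where f="\<lambda>_. 0" and a = d, OF dsum])
  then have "d 0 = 0" using LIM_const_eq by metis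
  then show "c m = 0" by (simp add: d_def)
qed

lemma mono_pow_upd:
  assumes "\<nu> k = 0"
  shows "mono_pow v (\<nu>(k := m)) = (v$k)^m * mono_pow v \<nu>"
proof -
  have "mono_pow v (\<nu>(k := m)) = (v$k)^m * (\<Prod>i\<in>UNIV-{k}. (v$i)^(\<nu> i))"
    unfolding mono_pow_def by (subst prod.remove[of UNIV k]) auto
  moreover have "mono_pow v \<nu> = (\<Prod>i\<in>UNIV-{k}. (v$i)^(\<nu> i))"
    unfolding mono_pow_def using assms by (subst prod.remove[of UNIV k]) auto
  ultimately show ?thesis by simp
qed

lemma mono_pow_indep:
  assumes "\<nu> k = 0" "\<And>i. i \<noteq> k \<Longrightarrow> v$i = v'$i"
  shows "mono_pow v \<nu> = mono_pow v' \<nu>"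
  unfolding mono_pow_def using assms by (intro prod.cong) (auto simp del: power_0, metis power_0)



lemma uniq_aux:
  fixes r :: real and S :: "'n::finite set"
  assumes "finite S" and r: "r > 0"
  shows "\<forall>b::('n\<Rightarrow>nat)\<Rightarrow>real. (\<forall>\<mu>. b \<mu> \<noteq> 0 \<longrightarrow> (\<forall>i. i \<notin> S \<longrightarrow> \<mu> i = 0)) \<longrightarrow>
     (\<forall>w::real^'n. (\<forall>i. \<bar>w$i\<bar> < r) \<longrightarrow> ((\<lambda>\<mu>. b \<mu> * mono_pow w \<mu>) has_sum 0) UNIV) \<longrightarrow>
     (\<forall>\<mu>. b \<mu> = 0)"
  using assms(1)
proof (induction S rule: finite_induct)
  case empty
  show ?case
  proof (intro allI impI)
    fix b :: "('n\<Rightarrow>nat)\<Rightarrow>real" and \<mu> :: "'n \<Rightarrow> nat"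
    assume supp: "\<forall>\<mu>. b \<mu> \<noteq> 0 \<longrightarrow> (\<forall>i. i \<notin> {} \<longrightarrow> \<mu> i = 0)"
      and hs: "\<forall>w::real^'n. (\<forall>i. \<bar>w$i\<bar> < r) \<longrightarrow> ((\<lambda>\<mu>. b \<mu> * mono_pow w \<mu>) has_sum 0) UNIV"
    have supp': "b \<nu> = 0" if "\<nu> \<noteq> (\<lambda>_. 0)" for \<nu>
      using supp that by auto
    have h1: "((\<lambda>\<mu>. b \<mu> * mono_pow 0 \<mu>) has_sum 0) UNIV"
      using hs[rule_format, of 0] r by simp
    have h2: "((\<lambda>\<mu>. b \<mu> * mono_pow 0 \<mu>) has_sum b (\<lambda>_. 0)) {\<lambda>_. 0}"
      by (rule has_sum_finiteI) simp_all
    have "((\<lambda>\<mu>. b \<mu> * mono_pow 0 \<mu>) has_sum b (\<lambda>_. 0)) UNIV"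
      using h2 by (subst has_sum_cong_neutral[where T="{\<lambda>_. 0}"]) (auto simp: supp')
    with h1 have b0: "b (\<lambda>_. 0) = 0" using has_sum_unique by blast
    show "b \<mu> = 0"
      using b0 supp' by (cases "\<mu> = (\<lambda>_. 0)") auto
  qed
next
  case (insert k S)
  show ?case
  proof (intro allI impI)
    fix b :: "('n\<Rightarrow>nat)\<Rightarrow>real" and \<mu> :: "'n \<Rightarrow> nat"
    assume supp: "\<forall>\<mu>. b \<mu> \<noteq> 0 \<longrightarrow> (\<forall>i. i \<notin> insert k S \<longrightarrow> \<mu> i = 0)"
      and hs: "\<forall>w::real^'n. (\<forall>i. \<bar>w$i\<bar> < r) \<longrightarrow> ((\<lambda>\<mu>. b \<mu> * mono_pow w \<mu>) has_sum 0) UNIV"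
    define c where "c m \<nu> = (if \<nu> k = 0 then b (\<nu>(k := m)) else 0)" for m \<nu>
    define D where "D = {\<nu>::'n\<Rightarrow>nat. \<nu> k = 0}"
    have key: "((\<lambda>(m,\<nu>). b (\<nu>(k:=m)) * mono_pow v (\<nu>(k:=m))) has_sum 0) (UNIV \<times> D)"
      if v: "\<forall>i. \<bar>v$i\<bar> < r" for v :: "real^'n"
    proof -
      have h: "((\<lambda>\<mu>. b \<mu> * mono_pow v \<mu>) has_sum 0) UNIV" using hs v by blast
      have "((\<lambda>\<mu>. b \<mu> * mono_pow v \<mu>) has_sum 0) UNIV =
            ((\<lambda>(m,\<nu>). b (\<nu>(k:=m)) * mono_pow v (\<nu>(k:=m))) has_sum 0) (UNIV \<times> D)"
      proof (rule has_sum_reindex_bij_witness[where j = "\<lambda>\<mu>. (\<mu> k, \<mu>(k:=0))" and i = "\<lambda>(m,\<nu>). \<nu>(k:=m)"])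
        fix p :: "nat \<times> ('n \<Rightarrow> nat)"
        assume "p \<in> UNIV \<times> D"
        then obtain m \<nu> where p: "p = (m,\<nu>)" "\<nu> k = 0" by (cases p) (auto simp: D_def)
        have "\<nu>(k := 0) = \<nu>" using p(2) by (intro ext) auto
        then show "((\<lambda>(m, \<nu>). \<nu>(k := m)) p k, ((\<lambda>(m, \<nu>). \<nu>(k := m)) p)(k := 0)) = p"
          using p by simp
      qed (auto simp: D_def)
      with h show ?thesis by blast
    qed
    have csum: "(\<lambda>\<nu>. c m \<nu> * mono_pow w \<nu>) summable_on UNIV" if w: "\<forall>i. \<bar>w$i\<bar> < r" for m w
    proof -
      define v :: "real^'n" where "v = (\<chi> i. if i = k then r/2 else w$i)"
      have v: "\<forall>i. \<bar>v$i\<bar> < r" using w r by (auto simp: v_def)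
      have s: "(\<lambda>(m,\<nu>). b (\<nu>(k:=m)) * mono_pow v (\<nu>(k:=m))) summable_on (UNIV \<times> D)"
        using key[OF v] summable_on_def by blast
      have "(\<lambda>\<nu>. b (\<nu>(k:=m)) * mono_pow v (\<nu>(k:=m))) summable_on D"
        using summable_on_SigmaD1[of "\<lambda>m \<nu>. b (\<nu>(k:=m)) * mono_pow v (\<nu>(k:=m))" UNIV "\<lambda>_. D" m] s
        by simp
      then have s2: "(\<lambda>\<nu>. inverse ((r/2)^m) * (b (\<nu>(k:=m)) * mono_pow v (\<nu>(k:=m)))) summable_on D"
        by (rule summable_on_cmult_right)
      have eq: "inverse ((r/2)^m) * (b (\<nu>(k:=m)) * mono_pow v (\<nu>(k:=m))) = c m \<nu> * mono_pow w \<nu>"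
        if "\<nu> \<in> D" for \<nu>
      proof -
        have nk: "\<nu> k = 0" using that by (simp add: D_def)
        have "mono_pow v (\<nu>(k:=m)) = (r/2)^m * mono_pow v \<nu>"
          using mono_pow_upd[where \<nu>=\<nu> and k=k, OF nk] by (simp add: v_def)
        moreover have "mono_pow v \<nu> = mono_pow w \<nu>"
          by (rule mono_pow_indep[where \<nu>=\<nu> and k=k, OF nk]) (simp add: v_def)
        ultimately show ?thesis using r nk by (simp add: c_def field_simps)
      qed
      have "(\<lambda>\<nu>. inverse ((r/2)^m) * (b (\<nu>(k:=m)) * mono_pow v (\<nu>(k:=m)))) summable_on D
           \<longleftrightarrow> (\<lambda>\<nu>. c m \<nu> * mono_pow w \<nu>) summable_on D"
        by (rule summable_on_cong) (rule eq)
      with s2 have "(\<lambda>\<nu>. c m \<nu> * mono_pow w \<nu>) summable_on D" by blast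
      then show ?thesis
        by (rule summable_on_cong_neutral[THEN iffD1, rotated -1]) (auto simp: c_def D_def)
    qed
    define C where "C m w = infsum (\<lambda>\<nu>. c m \<nu> * mono_pow w \<nu>) UNIV" for m w
    have Cz: "C m w = 0" if w: "\<forall>i. \<bar>w$i\<bar> < r" for m w
    proof -
      have "((\<lambda>m. C m w * t^m) has_sum 0) UNIV" if t: "\<bar>t\<bar> < r" for t
      proof -
        define v :: "real^'n" where "v = (\<chi> i. if i = k then t else w$i)"
        have v: "\<forall>i. \<bar>v$i\<bar> < r" using w t by (auto simp: v_def)
        have inner: "((\<lambda>\<nu>. b (\<nu>(k:=m)) * mono_pow v (\<nu>(k:=m))) has_sum (C m w * t^m)) D" for m
        proof -
          have "((\<lambda>\<nu>. c m \<nu> * mono_pow w \<nu>) has_sum C m w) UNIV"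
            unfolding C_def using csum[OF w] by (rule has_sum_infsum)
          then have "((\<lambda>\<nu>. c m \<nu> * mono_pow w \<nu>) has_sum C m w) D"
            by (rule has_sum_cong_neutral[THEN iffD1, rotated -1]) (auto simp: c_def D_def)
          then have h: "((\<lambda>\<nu>. t^m * (c m \<nu> * mono_pow w \<nu>)) has_sum t^m * C m w) D"
            by (rule has_sum_cmult_right)
          have eq: "t^m * (c m \<nu> * mono_pow w \<nu>) = b (\<nu>(k:=m)) * mono_pow v (\<nu>(k:=m))"
            if "\<nu> \<in> D" for \<nu>
          proof -
            have nk: "\<nu> k = 0" using that by (simp add: D_def)
            have "mono_pow v (\<nu>(k:=m)) = t^m * mono_pow v \<nu>"
              using mono_pow_upd[where \<nu>=\<nu> and k=k, OF nk] by (simp add: v_def)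
            moreover have "mono_pow v \<nu> = mono_pow w \<nu>"
              by (rule mono_pow_indep[where \<nu>=\<nu> and k=k, OF nk]) (simp add: v_def)
            ultimately show ?thesis using nk by (simp add: c_def)
          qed
          have "((\<lambda>\<nu>. t^m * (c m \<nu> * mono_pow w \<nu>)) has_sum t^m * C m w) D
              \<longleftrightarrow> ((\<lambda>\<nu>. b (\<nu>(k:=m)) * mono_pow v (\<nu>(k:=m))) has_sum t^m * C m w) D"
            by (rule has_sum_cong) (rule eq)
          with h show ?thesis by (simp add: mult.commute)
        qed
        show ?thesis
          by (rule has_sum_SigmaD[OF key[OF v]]) (use inner in simp)
      qed
      then show ?thesis using powser_unique0[OF r, of "\<lambda>m. C m w"] by blast
    qed
    have c0: "c m \<nu> = 0" for m \<nu>
    proof -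
      have P1: "\<forall>\<nu>. c m \<nu> \<noteq> 0 \<longrightarrow> (\<forall>i. i \<notin> S \<longrightarrow> \<nu> i = 0)"
      proof (intro allI impI)
        fix \<nu> i
        assume "c m \<nu> \<noteq> 0" "i \<notin> S"
        then show "\<nu> i = 0" using supp by (cases "i = k") (auto simp: c_def split: if_splits)
      qed
      have P2: "\<forall>w::real^'n. (\<forall>i. \<bar>w$i\<bar> < r) \<longrightarrow> ((\<lambda>\<nu>. c m \<nu> * mono_pow w \<nu>) has_sum 0) UNIV"
      proof (intro allI impI)
        fix w :: "real^'n"
        assume w: "\<forall>i. \<bar>w$i\<bar> < r"
        show "((\<lambda>\<nu>. c m \<nu> * mono_pow w \<nu>) has_sum 0) UNIV"
          using has_sum_infsum[OF csum[OF w, of m]] Cz[OF w, of m] unfolding C_def by simp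
      qed
      show ?thesis using insert.IH P1 P2 by blast
    qed
    have "\<mu> = (\<mu>(k:=0))(k := \<mu> k)" by simp
    then have "b \<mu> = c (\<mu> k) (\<mu>(k:=0))" by (simp add: c_def)
    then show "b \<mu> = 0" using c0 by simp
  qed
qed

lemma uniq:
  fixes b :: "('n::finite\<Rightarrow>nat)\<Rightarrow>real"
  assumes r: "r > 0"
    and hs: "\<And>w::real^'n. (\<forall>i. \<bar>w$i\<bar> < r) \<Longrightarrow> ((\<lambda>\<mu>. b \<mu> * mono_pow w \<mu>) has_sum 0) UNIV"
  shows "b \<mu> = 0"
  using uniq_aux[of "UNIV::'n set", OF _ r] hs by simp



lemma has_sum_sum_fin:
  fixes f :: "'i \<Rightarrow> 'a \<Rightarrow> real"
  assumes "finite I" "\<And>i. i \<in> I \<Longrightarrow> (f i has_sum s i) A"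
  shows "((\<lambda>x. \<Sum>i\<in>I. f i x) has_sum (\<Sum>i\<in>I. s i)) A"
  using assms
proof (induction I rule: finite_induct)
  case empty
  then show ?case by simp
next
  case (insert k I)
  have "((\<lambda>x. f k x + (\<Sum>i\<in>I. f i x)) has_sum (s k + (\<Sum>i\<in>I. s i))) A"
    by (rule has_sum_add) (use insert in auto)
  then show ?case using insert by simp
qed

lemma ser_delta: "((\<lambda>\<mu>. (if \<mu> = (\<lambda>_. 0) then c else 0) * mono_pow w \<mu>) has_sum c) UNIV"
proof -
  have "((\<lambda>\<mu>. (if \<mu> = (\<lambda>_. 0) then c else 0) * mono_pow w \<mu>) has_sum c) {\<lambda>_. 0}"
    by (rule has_sum_finiteI) simp_all
  then show ?thesis
    by (subst has_sum_cong_neutral[where T="{\<lambda>_. 0}"]) auto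
qed

definition ec :: "'n \<Rightarrow> ('n::finite \<Rightarrow> nat) \<Rightarrow> real" where
  "ec i \<mu> = (if (\<forall>l. l \<noteq> i \<longrightarrow> \<mu> l = 0) then 1 / fact (\<mu> i) else 0)"

lemma ec_nonneg: "ec i \<mu> \<ge> 0" by (simp add: ec_def)

lemma ec_zero[simp]: "ec i (\<lambda>_. 0) = 1" by (simp add: ec_def)

lemma exp_has_sum: "((\<lambda>k. x^k / fact k) has_sum exp (x::real)) UNIV"
proof (rule norm_summable_imp_has_sum)
  show "summable (\<lambda>n. norm (x ^ n / fact n))"
    using summable_exp[of "\<bar>x\<bar>"] by (simp add: power_abs divide_inverse abs_mult mult.commute)
  show "(\<lambda>n. x ^ n / fact n) sums exp x"
    using exp_converges[of x] by (simp add: divide_inverse scaleR_conv_of_real mult.commute)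
qed

lemma ser_ec: "((\<lambda>\<mu>. ec i \<mu> * mono_pow w \<mu>) has_sum exp (w$i)) UNIV"
proof -
  have inj: "inj (sng i)"
    by (rule injI) (metis sng_def)
  have "((\<lambda>\<mu>. ec i \<mu> * mono_pow w \<mu>) \<circ> sng i) = (\<lambda>k. (w$i)^k / fact k)"
    by (auto simp: ec_def sng_def mono_pow_sng[unfolded sng_def])
  then have "((\<lambda>\<mu>. ec i \<mu> * mono_pow w \<mu>) has_sum exp (w$i)) (range (sng i))"
    using has_sum_reindex[OF inj, of "\<lambda>\<mu>. ec i \<mu> * mono_pow w \<mu>" "exp (w$i)"] exp_has_sum by simp
  moreover have "\<mu> \<in> range (sng i)" if "ec i \<mu> \<noteq> 0" for \<mu>
  proof -
    have "\<mu> = sng i (\<mu> i)" using that by (auto simp: ec_def sng_def split: if_splits)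
    then show ?thesis by blast
  qed
  ultimately show ?thesis
    by (subst has_sum_cong_neutral[where T="range (sng i)"]) auto
qed

definition hc :: "('n \<Rightarrow> real) \<Rightarrow> ('n::finite \<Rightarrow> nat) \<Rightarrow> real" where
  "hc p \<mu> = (if \<mu> = (\<lambda>_. 0) then 0 else (\<Sum>i\<in>UNIV. p i * ec i \<mu>))"

lemma hc_nonneg: "(\<And>i. p i \<ge> 0) \<Longrightarrow> hc p \<mu> \<ge> 0"
  by (simp add: hc_def ec_nonneg sum_nonneg)

lemma hc_zero[simp]: "hc p (\<lambda>_. 0) = 0" by (simp add: hc_def)

lemma has_sum_diff':
  fixes f g :: "'a \<Rightarrow> real"
  assumes "(f has_sum a) A" "(g has_sum b) A"
  shows "((\<lambda>x. f x - g x) has_sum (a - b)) A"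
proof -
  have "((\<lambda>x. - g x) has_sum (- b)) A" using assms(2) has_sum_uminus[where f=g and a="-b"] by simp
  from has_sum_add[OF assms(1) this] show ?thesis by simp
qed

lemma ser_hc: "((\<lambda>\<mu>. hc p \<mu> * mono_pow w \<mu>) has_sum ((\<Sum>i\<in>UNIV. p i * exp (w$i)) - (\<Sum>i\<in>UNIV. p i))) UNIV"
proof -
  have h1: "((\<lambda>\<mu>. \<Sum>i\<in>UNIV. p i * (ec i \<mu> * mono_pow w \<mu>)) has_sum (\<Sum>i\<in>UNIV. p i * exp (w$i))) UNIV"
    by (rule has_sum_sum_fin) (auto intro: has_sum_cmult_right ser_ec)
  have h2: "((\<lambda>\<mu>. (if \<mu> = (\<lambda>_. 0) then (\<Sum>i\<in>UNIV. p i) else 0) * mono_pow w \<mu>) has_sum (\<Sum>i\<in>UNIV. p i)) UNIV"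
    by (rule ser_delta)
  have "hc p \<mu> * mono_pow w \<mu> = (\<Sum>i\<in>UNIV. p i * (ec i \<mu> * mono_pow w \<mu>)) - (if \<mu> = (\<lambda>_. 0) then (\<Sum>i\<in>UNIV. p i) else 0) * mono_pow w \<mu>" for \<mu>
    by (simp add: hc_def sum_distrib_right mult.assoc)
  then show ?thesis using has_sum_diff'[OF h1 h2] by simp
qed

fun pw :: "(('n::finite \<Rightarrow> nat) \<Rightarrow> real) \<Rightarrow> nat \<Rightarrow> ('n \<Rightarrow> nat) \<Rightarrow> real" where
  "pw a 0 = (\<lambda>\<mu>. if \<mu> = (\<lambda>_. 0) then 1 else 0)"
| "pw a (Suc m) = conv a (pw a m)"

lemma ser_pw:
  assumes "((\<lambda>\<mu>. a \<mu> * mono_pow w \<mu>) has_sum T) UNIV"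
  shows "((\<lambda>\<mu>. pw a m \<mu> * mono_pow w \<mu>) has_sum T^m) UNIV"
proof (induction m)
  case 0
  show ?case using ser_delta[of 1 w] by simp
next
  case (Suc m)
  show ?case using ser_conv[OF assms Suc] by simp
qed

lemma conv_nonneg: "(\<And>\<mu>. a \<mu> \<ge> 0) \<Longrightarrow> (\<And>\<mu>. b \<mu> \<ge> 0) \<Longrightarrow> conv a b \<mu> \<ge> 0"
  by (simp add: conv_def sum_nonneg)

lemma pw_nonneg: "(\<And>\<mu>. a \<mu> \<ge> 0) \<Longrightarrow> pw a m \<mu> \<ge> 0"
  by (induction m arbitrary: \<mu>) (auto intro: conv_nonneg)

lemma mi_deg_diff:
  assumes "\<forall>i. \<nu> i \<le> \<mu> i"
  shows "mi_deg (\<lambda>i. \<mu> i - \<nu> i) = mi_deg \<mu> - mi_deg \<nu>"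
proof -
  have "mi_deg (\<lambda>i. \<mu> i - \<nu> i) + mi_deg \<nu> = mi_deg \<mu>"
    unfolding mi_deg_def sum.distrib[symmetric] using assms by (intro sum.cong) auto
  then show ?thesis by linarith
qed

lemma mi_deg_pos: "\<nu> \<noteq> (\<lambda>_. 0) \<Longrightarrow> mi_deg \<nu> \<ge> 1"
proof -
  assume "\<nu> \<noteq> (\<lambda>_. 0)"
  then obtain i where "\<nu> i \<noteq> 0" by auto
  then have "\<nu> i \<le> mi_deg \<nu>" unfolding mi_deg_def
    by (intro member_le_sum) auto
  with \<open>\<nu> i \<noteq> 0\<close> show ?thesis by linarith
qed

lemma mi_deg_zero_iff: "mi_deg \<nu> = 0 \<longleftrightarrow> \<nu> = (\<lambda>_. 0)"
  unfolding mi_deg_def by (auto simp: fun_eq_iff)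

lemma pw_vanish:
  assumes "a (\<lambda>_. 0) = 0"
  shows "m > mi_deg \<mu> \<Longrightarrow> pw a m \<mu> = 0"
proof (induction m arbitrary: \<mu>)
  case 0
  then show ?case by simp
next
  case (Suc m)
  have "a \<nu> * pw a m (\<lambda>i. \<mu> i - \<nu> i) = 0" if "\<forall>i. \<nu> i \<le> \<mu> i" for \<nu>
  proof (cases "\<nu> = (\<lambda>_. 0)")
    case True
    then show ?thesis using assms by simp
  next
    case False
    have "mi_deg \<nu> \<le> mi_deg \<mu>" unfolding mi_deg_def using that by (intro sum_mono) auto
    then have "mi_deg (\<lambda>i. \<mu> i - \<nu> i) < m"
      using mi_deg_diff[OF that] mi_deg_pos[OF False] Suc.prems by linarith
    then show ?thesis using Suc.IH by simp
  qed
  then show ?case by (simp only: pw.simps conv_def) (intro sum.neutral, blast)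
qed



lemma geom_has_sum:
  fixes c :: real
  assumes "\<bar>c\<bar> < 1"
  shows "((\<lambda>n. c^n) has_sum (1/(1-c))) UNIV"
proof (rule norm_summable_imp_has_sum)
  show "summable (\<lambda>n. norm (c^n))"
    using summable_geometric[of "\<bar>c\<bar>"] assms by (simp add: power_abs)
  show "(\<lambda>n. c^n) sums (1/(1-c))" using geometric_sums[of c] assms by simp
qed

definition gs :: "(('n::finite \<Rightarrow> nat) \<Rightarrow> real) \<Rightarrow> real \<Rightarrow> ('n \<Rightarrow> nat) \<Rightarrow> real" where
  "gs a \<sigma> \<mu> = (\<Sum>m\<le>mi_deg \<mu>. \<sigma>^m * pw a m \<mu>)"

lemma mi_deg_0[simp]: "mi_deg (\<lambda>_. 0) = 0" by (simp add: mi_deg_def)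

lemma gs_zero[simp]: "gs a \<sigma> (\<lambda>_. 0) = 1" by (simp add: gs_def)

lemma gs_abs: "(\<And>\<mu>. a \<mu> \<ge> 0) \<Longrightarrow> \<bar>gs a \<sigma> \<mu>\<bar> \<le> gs a 1 \<mu>" if "\<bar>\<sigma>\<bar> \<le> 1"
proof -
  assume nn: "\<And>\<mu>. a \<mu> \<ge> 0"
  have "\<bar>gs a \<sigma> \<mu>\<bar> \<le> (\<Sum>m\<le>mi_deg \<mu>. \<bar>\<sigma>^m * pw a m \<mu>\<bar>)"
    unfolding gs_def by (rule sum_abs)
  also have "\<dots> \<le> (\<Sum>m\<le>mi_deg \<mu>. 1^m * pw a m \<mu>)"
  proof (rule sum_mono)
    fix m
    have "\<bar>\<sigma>^m\<bar> \<le> 1" using that by (simp add: power_abs power_le_one)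
    then show "\<bar>\<sigma>^m * pw a m \<mu>\<bar> \<le> 1^m * pw a m \<mu>"
      using pw_nonneg[OF nn, where m=m and \<mu>=\<mu>] by (simp add: abs_mult mult_left_le_one_le)
  qed
  finally show ?thesis by (simp add: gs_def)
qed

lemma gs_nonneg1: "(\<And>\<mu>. a \<mu> \<ge> 0) \<Longrightarrow> gs a 1 \<mu> \<ge> 0"
  by (simp add: gs_def sum_nonneg pw_nonneg)

lemma ser_gs:
  fixes a :: "('n::finite \<Rightarrow> nat) \<Rightarrow> real"
  assumes nn: "\<And>\<mu>. a \<mu> \<ge> 0" and a0: "a (\<lambda>_. 0) = 0"
    and hS: "((\<lambda>\<mu>. a \<mu> * mono_pow (absv w) \<mu>) has_sum S) UNIV" and S1: "S < 1"
    and hT: "((\<lambda>\<mu>. a \<mu> * mono_pow w \<mu>) has_sum T) UNIV" and \<sigma>: "\<bar>\<sigma>\<bar> \<le> 1"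
  shows "((\<lambda>\<mu>. gs a \<sigma> \<mu> * mono_pow w \<mu>) has_sum (1/(1 - \<sigma>*T))) UNIV"
proof -
  define \<Phi> where "\<Phi> = (\<lambda>(m::nat,\<mu>::'n\<Rightarrow>nat). \<sigma>^m * pw a m \<mu> * mono_pow w \<mu>)"
  define \<Psi> where "\<Psi> = (\<lambda>(m::nat,\<mu>::'n\<Rightarrow>nat). pw a m \<mu> * mono_pow (absv w) \<mu>)"
  have S0: "S \<ge> 0"
    by (rule has_sum_nonneg[OF hS]) (simp add: nn mono_pow_absv_nonneg)
  have gS: "((\<lambda>m. S^m) has_sum (1/(1-S))) UNIV" using geom_has_sum[of S] S0 S1 by simp
  have sPsi: "\<Psi> summable_on Sigma UNIV (\<lambda>_. UNIV)"
  proof (rule summable_on_SigmaI[where g = "\<lambda>m. S^m"])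
    show "\<And>m. m \<in> UNIV \<Longrightarrow> ((\<lambda>\<mu>. \<Psi> (m, \<mu>)) has_sum S ^ m) UNIV"
      unfolding \<Psi>_def using ser_pw[OF hS] by simp
    show "(\<lambda>m. S^m) summable_on UNIV" using gS summable_on_def by blast
    show "\<And>x y. x \<in> UNIV \<Longrightarrow> y \<in> UNIV \<Longrightarrow> 0 \<le> \<Psi> (x, y)"
      unfolding \<Psi>_def by (simp add: pw_nonneg nn mono_pow_absv_nonneg)
  qed
  have bnd: "norm (\<Phi> p) \<le> \<Psi> p" for p
  proof -
    obtain m \<mu> where p: "p = (m,\<mu>)" by (cases p)
    have "\<bar>\<sigma>^m\<bar> \<le> 1" using \<sigma> by (simp add: power_abs power_le_one)
    moreover have "\<bar>pw a m \<mu> * mono_pow w \<mu>\<bar> = pw a m \<mu> * mono_pow (absv w) \<mu>"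
      using pw_nonneg[OF nn, where m=m and \<mu>=\<mu>] by (simp add: abs_mult mono_pow_abs)
    moreover have "0 \<le> pw a m \<mu> * mono_pow (absv w) \<mu>"
      using pw_nonneg[OF nn, where m=m and \<mu>=\<mu>] by (simp add: mono_pow_absv_nonneg)
    ultimately have "\<bar>\<sigma>^m\<bar> * \<bar>pw a m \<mu> * mono_pow w \<mu>\<bar> \<le> pw a m \<mu> * mono_pow (absv w) \<mu>"
      by (simp add: mult_left_le_one_le)
    then show ?thesis unfolding p \<Phi>_def \<Psi>_def by (simp add: abs_mult mult.assoc)
  qed
  have "(\<lambda>p. norm (\<Phi> p)) summable_on Sigma UNIV (\<lambda>_. UNIV)"
    by (rule Infinite_Sum.abs_summable_on_comparison_test'[OF sPsi]) (rule bnd)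
  then have sPhi: "\<Phi> summable_on Sigma UNIV (\<lambda>_. UNIV)"
    by (rule summable_on_iff_abs_summable_on_real[THEN iffD2])
  have TS: "\<bar>T\<bar> \<le> S"
  proof -
    have e: "\<bar>a \<mu> * mono_pow w \<mu>\<bar> = a \<mu> * mono_pow (absv w) \<mu>" for \<mu>
      using nn[of \<mu>] by (simp add: abs_mult mono_pow_abs)
    have "T \<le> S" by (rule has_sum_mono[OF hT hS]) (metis abs_ge_self e)
    moreover have "-T \<le> S"
    proof (rule has_sum_mono[OF _ hS])
      show "((\<lambda>\<mu>. - (a \<mu> * mono_pow w \<mu>)) has_sum - T) UNIV"
        using hT has_sum_uminus[where f="\<lambda>\<mu>. a \<mu> * mono_pow w \<mu>" and a="-T"] by simp
      show "\<And>\<mu>. \<mu> \<in> UNIV \<Longrightarrow> - (a \<mu> * mono_pow w \<mu>) \<le> a \<mu> * mono_pow (absv w) \<mu>"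
        by (metis abs_ge_minus_self e)
    qed
    ultimately show ?thesis by linarith
  qed
  have sT: "\<bar>\<sigma>*T\<bar> < 1"
  proof -
    have "\<bar>\<sigma>*T\<bar> = \<bar>\<sigma>\<bar> * \<bar>T\<bar>" by (simp add: abs_mult)
    also have "\<dots> \<le> \<bar>T\<bar>" using \<sigma> by (simp add: mult_left_le_one_le)
    finally show ?thesis using TS S1 by linarith
  qed
  have hPhi: "(\<Phi> has_sum (1/(1 - \<sigma>*T))) (Sigma UNIV (\<lambda>_. UNIV))"
  proof (rule has_sum_SigmaI[where g = "\<lambda>m. (\<sigma>*T)^m"])
    show "\<And>m. m \<in> UNIV \<Longrightarrow> ((\<lambda>\<mu>. \<Phi> (m, \<mu>)) has_sum (\<sigma>*T) ^ m) UNIV"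
    proof -
      fix m :: nat
      have "((\<lambda>\<mu>. \<sigma>^m * (pw a m \<mu> * mono_pow w \<mu>)) has_sum \<sigma>^m * T^m) UNIV"
        by (rule has_sum_cmult_right[OF ser_pw[OF hT]])
      then show "((\<lambda>\<mu>. \<Phi> (m, \<mu>)) has_sum (\<sigma>*T) ^ m) UNIV"
        unfolding \<Phi>_def by (simp add: mult.assoc power_mult_distrib)
    qed
    show "((\<lambda>m. (\<sigma>*T)^m) has_sum (1/(1 - \<sigma>*T))) UNIV" by (rule geom_has_sum[OF sT])
    show "\<Phi> summable_on Sigma UNIV (\<lambda>_. UNIV)" by (rule sPhi)
  qed
  then have hPhi': "((\<lambda>(\<mu>,m). \<Phi> (m,\<mu>)) has_sum (1/(1 - \<sigma>*T))) (UNIV \<times> UNIV)"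
    using has_sum_swap by blast
  show ?thesis
  proof (rule has_sum_SigmaD[OF hPhi'])
    fix \<mu> :: "'n \<Rightarrow> nat"
    have "((\<lambda>m. \<Phi> (m,\<mu>)) has_sum gs a \<sigma> \<mu> * mono_pow w \<mu>) {..mi_deg \<mu>}"
      by (rule has_sum_finiteI) (simp_all add: \<Phi>_def gs_def sum_distrib_right)
    then show "((\<lambda>m. (\<lambda>(\<mu>,m). \<Phi> (m,\<mu>)) (\<mu>, m)) has_sum gs a \<sigma> \<mu> * mono_pow w \<mu>) UNIV"
      by (subst has_sum_cong_neutral[where T="{..mi_deg \<mu>}"]) (auto simp: \<Phi>_def pw_vanish[where a=a, OF a0])
  qed
qed



definition pz :: "real^'n \<Rightarrow> 'n::finite \<Rightarrow> real" where
  "pz z0 i = exp (z0$i) / (\<Sum>k\<in>UNIV. exp (z0$k))"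

lemma sumexp_pos: "(\<Sum>k\<in>(UNIV::'n::finite set). exp ((z0::real^'n)$k)) > 0"
  by (rule ordered_comm_monoid_add_class.sum_pos) auto

lemma pz_pos: "pz z0 i > 0"
  using sumexp_pos[of z0] by (simp add: pz_def)

lemma pz_sum: "(\<Sum>i\<in>UNIV. pz z0 i) = 1"
  using sumexp_pos[of z0] by (simp add: pz_def sum_divide_distrib[symmetric])

lemma pz_le1: "pz z0 i \<le> 1"
proof -
  have "pz z0 i \<le> (\<Sum>k\<in>UNIV. pz z0 k)"
    by (rule member_le_sum) (auto simp: less_imp_le[OF pz_pos])
  then show ?thesis by (simp add: pz_sum)
qed

definition Ec :: "real^'n \<Rightarrow> 'n::finite \<Rightarrow> ('n \<Rightarrow> nat) \<Rightarrow> real" where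
  "Ec z0 j \<mu> = pz z0 j * ec j \<mu>"

definition Ac :: "real^'n \<Rightarrow> 'n::finite \<Rightarrow> ('n \<Rightarrow> nat) \<Rightarrow> real" where
  "Ac z0 j = conv (Ec z0 j) (gs (hc (pz z0)) (-1))"

definition Bc :: "real^'n \<Rightarrow> 'n::finite \<Rightarrow> ('n \<Rightarrow> nat) \<Rightarrow> real" where
  "Bc z0 j = conv (Ec z0 j) (gs (hc (pz z0)) 1)"

lemma absv_absv[simp]: "absv (absv w) = absv w"
  by (simp add: absv_def)

lemma absv_nth[simp]: "absv w $ i = \<bar>w$i\<bar>"
  by (simp add: absv_def)

lemma exp_lt2: "\<bar>x::real\<bar> < 1/2 \<Longrightarrow> exp \<bar>x\<bar> < 2"
proof -
  assume "\<bar>x\<bar> < 1/2"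
  then have "exp \<bar>x\<bar> < exp (1/2::real)" by simp
  also have "exp (1/2::real) \<le> 2" using exp_bound_lemma[of "1/2::real"] by simp
  finally show ?thesis .
qed

lemma sum_lt2:
  assumes "\<forall>i. \<bar>w$i\<bar> < 1/2"
  shows "(\<Sum>i\<in>UNIV. pz z0 i * exp \<bar>w$i\<bar>) < 2"
proof -
  have "(\<Sum>i\<in>UNIV. pz z0 i * exp \<bar>w$i\<bar>) < (\<Sum>i\<in>(UNIV::'a set). pz z0 i * 2)"
    by (rule sum_strict_mono) (auto intro!: mult_strict_left_mono exp_lt2 pz_pos assms[rule_format])
  also have "\<dots> = 2" by (simp add: sum_distrib_right[symmetric] pz_sum)
  finally show ?thesis .
qed

lemma ser_Ec: "((\<lambda>\<mu>. Ec z0 j \<mu> * mono_pow w \<mu>) has_sum (pz z0 j * exp (w$j))) UNIV"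
  using has_sum_cmult_right[OF ser_ec[of j w], of "pz z0 j"] by (simp add: Ec_def mult.assoc)

lemma Ec_nonneg: "Ec z0 j \<mu> \<ge> 0"
  by (simp add: Ec_def ec_nonneg less_imp_le[OF pz_pos])

lemma hc_pz_nonneg: "hc (pz z0) \<mu> \<ge> 0"
  by (rule hc_nonneg) (simp add: less_imp_le[OF pz_pos])

lemma ser_Ac:
  assumes w: "\<forall>i. \<bar>w$i\<bar> < 1/2"
  shows "((\<lambda>\<mu>. Ac z0 j \<mu> * mono_pow w \<mu>) has_sum smax (z0 + w) j) UNIV"
proof -
  define T where "T = (\<Sum>i\<in>UNIV. pz z0 i * exp (w$i)) - 1"
  define S where "S = (\<Sum>i\<in>UNIV. pz z0 i * exp \<bar>w$i\<bar>) - 1"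
  have hT: "((\<lambda>\<mu>. hc (pz z0) \<mu> * mono_pow w \<mu>) has_sum T) UNIV"
    using ser_hc[of "pz z0" w] by (simp add: T_def pz_sum)
  have hS: "((\<lambda>\<mu>. hc (pz z0) \<mu> * mono_pow (absv w) \<mu>) has_sum S) UNIV"
    using ser_hc[of "pz z0" "absv w"] by (simp add: S_def pz_sum)
  have S1: "S < 1" using sum_lt2[OF w, of z0] by (simp add: S_def)
  have hG: "((\<lambda>\<mu>. gs (hc (pz z0)) (-1) \<mu> * mono_pow w \<mu>) has_sum (1/(1 - (-1)*T))) UNIV"
    by (rule ser_gs[OF hc_pz_nonneg hc_zero hS S1 hT]) simp
  have "((\<lambda>\<mu>. Ac z0 j \<mu> * mono_pow w \<mu>) has_sum (pz z0 j * exp (w$j)) * (1/(1 - (-1)*T))) UNIV"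
    unfolding Ac_def by (rule ser_conv[OF ser_Ec hG])
  moreover have "(pz z0 j * exp (w$j)) * (1/(1 - (-1)*T)) = smax (z0 + w) j"
  proof -
    have s0: "(\<Sum>k\<in>UNIV. exp (z0$k)) > 0" by (rule sumexp_pos)
    have "1 - (-1)*T = (\<Sum>i\<in>UNIV. exp (z0$i + w$i)) / (\<Sum>k\<in>UNIV. exp (z0$k))"
      by (simp add: T_def pz_def exp_add sum_divide_distrib[symmetric])
    then show ?thesis using s0 by (simp add: smax_def pz_def exp_add)
  qed
  ultimately show ?thesis by simp
qed

lemma ser_Bc:
  assumes w: "\<forall>i. \<bar>w$i\<bar> < 1/2"
  shows "((\<lambda>\<mu>. Bc z0 j \<mu> * mono_pow (absv w) \<mu>) has_sum
          (pz z0 j * exp \<bar>w$j\<bar> * (1/(2 - (\<Sum>i\<in>UNIV. pz z0 i * exp \<bar>w$i\<bar>))))) UNIV"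
proof -
  define S where "S = (\<Sum>i\<in>UNIV. pz z0 i * exp \<bar>w$i\<bar>) - 1"
  have hS: "((\<lambda>\<mu>. hc (pz z0) \<mu> * mono_pow (absv w) \<mu>) has_sum S) UNIV"
    using ser_hc[of "pz z0" "absv w"] by (simp add: S_def pz_sum)
  have hS': "((\<lambda>\<mu>. hc (pz z0) \<mu> * mono_pow (absv (absv w)) \<mu>) has_sum S) UNIV"
    using hS by simp
  have S1: "S < 1" using sum_lt2[OF w, of z0] by (simp add: S_def)
  have hG: "((\<lambda>\<mu>. gs (hc (pz z0)) 1 \<mu> * mono_pow (absv w) \<mu>) has_sum (1/(1 - 1*S))) UNIV"
    by (rule ser_gs[OF hc_pz_nonneg hc_zero hS' S1 hS]) simp
  have "((\<lambda>\<mu>. Bc z0 j \<mu> * mono_pow (absv w) \<mu>) has_sum (pz z0 j * exp \<bar>w$j\<bar>) * (1/(1 - 1*S))) UNIV"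
    unfolding Bc_def using ser_conv[OF ser_Ec hG] by simp
  then show ?thesis by (simp add: S_def)
qed

lemma conv_zero: "conv a b (\<lambda>_. 0) = a (\<lambda>_. 0) * b (\<lambda>_. 0)"
proof -
  have e: "{\<nu>::'n::finite\<Rightarrow>nat. \<forall>i. \<nu> i \<le> 0} = {\<lambda>_. 0}" by (auto simp: fun_eq_iff)
  show ?thesis unfolding conv_def e by simp
qed

lemma Ac_zero: "Ac z0 j (\<lambda>_. 0) = pz z0 j"
  by (simp add: Ac_def conv_zero Ec_def)

lemma Ac_abs: "\<bar>Ac z0 j \<mu>\<bar> \<le> Bc z0 j \<mu>"
proof -
  have "\<bar>Ac z0 j \<mu>\<bar> \<le> (\<Sum>\<nu>\<in>{\<nu>. \<forall>i. \<nu> i \<le> \<mu> i}. \<bar>Ec z0 j \<nu> * gs (hc (pz z0)) (-1) (\<lambda>i. \<mu> i - \<nu> i)\<bar>)"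
    unfolding Ac_def conv_def by (rule sum_abs)
  also have "\<dots> \<le> (\<Sum>\<nu>\<in>{\<nu>. \<forall>i. \<nu> i \<le> \<mu> i}. Ec z0 j \<nu> * gs (hc (pz z0)) 1 (\<lambda>i. \<mu> i - \<nu> i))"
  proof (rule sum_mono)
    fix \<nu>
    have "\<bar>gs (hc (pz z0)) (-1) (\<lambda>i. \<mu> i - \<nu> i)\<bar> \<le> gs (hc (pz z0)) 1 (\<lambda>i. \<mu> i - \<nu> i)"
      by (rule gs_abs[OF _ hc_pz_nonneg]) simp
    then show "\<bar>Ec z0 j \<nu> * gs (hc (pz z0)) (-1) (\<lambda>i. \<mu> i - \<nu> i)\<bar> \<le> Ec z0 j \<nu> * gs (hc (pz z0)) 1 (\<lambda>i. \<mu> i - \<nu> i)"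
      using Ec_nonneg[of z0 j \<nu>] by (simp add: abs_mult mult_left_mono)
  qed
  finally show ?thesis by (simp add: Bc_def conv_def)
qed

lemma Bc_nonneg: "Bc z0 j \<mu> \<ge> 0"
  unfolding Bc_def by (rule conv_nonneg[OF Ec_nonneg gs_nonneg1[OF hc_pz_nonneg]])



lemma numeric_bound:
  fixes p e1 s r0 :: real
  assumes p: "0 < p" "p \<le> 1" and e1: "0 \<le> e1" "e1 \<le> 1 + 2*r0" and s: "s \<le> 1 + 2*r0"
    and r0: "0 \<le> r0" "r0 \<le> 1/6"
  shows "p * e1 * (1 / (2 - s)) - p \<le> 1"
proof -
  have d: "2 - s \<ge> 1 - 2*r0" using s by linarith
  have dpos: "1 - 2*r0 > 0" using r0 by linarith
  have "p * e1 \<le> p * (1 + 2*r0)" using p e1 by (simp add: mult_left_mono)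
  also have "\<dots> \<le> (1 + p) * (1 - 2*r0)"
  proof -
    have "p*r0 \<le> 1*r0" by (rule mult_right_mono) (use p r0 in auto)
    then have "4*p*r0 \<le> 4*r0" by simp
    then show ?thesis using r0 by (simp add: algebra_simps)
  qed
  also have "\<dots> \<le> (1 + p) * (2 - s)" using d p by (simp add: mult_left_mono)
  finally have "p * e1 \<le> (1 + p) * (2 - s)" .
  then have "p * e1 / (2 - s) \<le> 1 + p" using d dpos by (simp add: divide_le_eq)
  then show ?thesis by simp
qed

theorem mainTheorem10:
  fixes j :: "'n::finite"
  shows "has_analytic_type (UNIV :: (real^'n) set) (\<lambda>_. 1 / (2 * exp 2)) (\<lambda>_. 1)
           (\<lambda>z. smax z j)"
proof -
  have ps: "power_series_at (\<lambda>z. smax z j) z0 (Ac z0 j)" for z0 :: "real^'n"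
    unfolding power_series_at_def
  proof (intro exI[of _ "1/2"] conjI allI impI)
    show "(0::real) < 1/2" by simp
    fix z :: "real^'n" assume "\<forall>i. \<bar>z$i - z0$i\<bar> < 1/2"
    then have "\<forall>i. \<bar>(z - z0)$i\<bar> < 1/2" by simp
    from ser_Ac[OF this, of z0 j]
    show "((\<lambda>\<mu>. Ac z0 j \<mu> * mono_pow (z - z0) \<mu>) has_sum smax z j) UNIV" by simp
  qed
  have uq: "a = Ac z0 j" if psa0: "power_series_at (\<lambda>z. smax z j) z0 a" for z0 :: "real^'n" and a
  proof -
    obtain r where r: "r > 0" and hr: "\<forall>z. (\<forall>i. \<bar>z$i - z0$i\<bar> < r) \<longrightarrow>
        ((\<lambda>\<mu>. a \<mu> * mono_pow (z - z0) \<mu>) has_sum smax z j) UNIV"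
      using psa0 unfolding power_series_at_def by blast
    define r' where "r' = min r (1/2)"
    have "a \<mu> - Ac z0 j \<mu> = 0" for \<mu>
    proof (rule uniq[of r' "\<lambda>\<mu>. a \<mu> - Ac z0 j \<mu>"])
      show "r' > 0" using r by (simp add: r'_def)
      fix w :: "real^'n" assume w: "\<forall>i. \<bar>w$i\<bar> < r'"
      have h1: "((\<lambda>\<mu>. a \<mu> * mono_pow w \<mu>) has_sum smax (z0 + w) j) UNIV"
        using hr[rule_format, of "z0 + w"] w by (simp add: r'_def)
      have h2: "((\<lambda>\<mu>. Ac z0 j \<mu> * mono_pow w \<mu>) has_sum smax (z0 + w) j) UNIV"
        using w by (intro ser_Ac) (auto simp: r'_def)
      show "((\<lambda>\<mu>. (a \<mu> - Ac z0 j \<mu>) * mono_pow w \<mu>) has_sum 0) UNIV"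
        using has_sum_diff'[OF h1 h2] by (simp add: left_diff_distrib)
    qed
    then show ?thesis by (auto simp: fun_eq_iff)
  qed
  define r0 :: real where "r0 = 1 / (2 * exp 2)"
  have r0: "0 < r0" "r0 \<le> 1/6"
  proof -
    have "(3::real) \<le> exp 2" using exp_ge_add_one_self[of 2] by simp
    then show "0 < r0" "r0 \<le> 1/6" by (auto simp: r0_def field_simps)
  qed
  have bound: "(\<lambda>\<mu>. \<bar>Ac z0 j \<mu>\<bar> * \<bar>mono_pow (z - z0) \<mu>\<bar>) summable_on UNIV \<and>
      (\<Sum>\<^sub>\<infinity>\<mu>\<in>{\<mu>. mi_deg \<mu> \<ge> 1}. \<bar>Ac z0 j \<mu>\<bar> * \<bar>mono_pow (z - z0) \<mu>\<bar>) \<le> 1"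
    if z: "\<forall>i. \<bar>z$i - z0$i\<bar> \<le> r0" for z0 z :: "real^'n"
  proof -
    define w where "w = z - z0"
    have wr: "\<bar>w$i\<bar> \<le> r0" for i using z by (simp add: w_def)
    have w: "\<forall>i. \<bar>w$i\<bar> < 1/2"
    proof
      fix i show "\<bar>w$i\<bar> < 1/2" using wr[of i] r0 by linarith
    qed
    define g where "g \<mu> = \<bar>Ac z0 j \<mu>\<bar> * \<bar>mono_pow w \<mu>\<bar>" for \<mu>
    define m where "m \<mu> = Bc z0 j \<mu> * mono_pow (absv w) \<mu>" for \<mu>
    define Bv where "Bv = pz z0 j * exp \<bar>w$j\<bar> * (1/(2 - (\<Sum>i\<in>UNIV. pz z0 i * exp \<bar>w$i\<bar>)))"
    have hB: "(m has_sum Bv) UNIV" unfolding m_def Bv_def by (rule ser_Bc[OF w])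
    have sm: "m summable_on UNIV" using hB summable_on_def by blast
    have gm: "g \<mu> \<le> m \<mu>" for \<mu>
      unfolding g_def m_def mono_pow_abs
      by (rule mult_right_mono[OF Ac_abs mono_pow_absv_nonneg])
    have g0: "0 \<le> g \<mu>" for \<mu> by (simp add: g_def)
    have sg: "g summable_on UNIV"
      by (rule summable_on_comparison_test[OF sm]) (use gm g0 in auto)
    have tot: "infsum g UNIV \<le> Bv"
    proof -
      have "infsum g UNIV \<le> infsum m UNIV" by (rule infsum_mono[OF sg sm gm])
      also have "infsum m UNIV = Bv" using hB by (rule infsumI)
      finally show ?thesis .
    qed
    have sg': "g summable_on (UNIV - {\<lambda>_. 0})" by (rule summable_on_subset[OF sg]) auto
    have "infsum g (insert (\<lambda>_. 0) (UNIV - {\<lambda>_. 0})) = g (\<lambda>_. 0) + infsum g (UNIV - {\<lambda>_. 0})"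
      by (rule infsum_insert[OF sg']) simp
    moreover have "insert (\<lambda>_. 0) (UNIV - {\<lambda>_. 0}) = (UNIV :: ('n \<Rightarrow> nat) set)" by auto
    moreover have "g (\<lambda>_. 0) = pz z0 j"
      using pz_pos[of z0 j] by (simp add: g_def Ac_zero)
    ultimately have split: "infsum g UNIV = pz z0 j + infsum g (UNIV - {\<lambda>_. 0})" by simp
    have seteq: "{\<mu>::'n\<Rightarrow>nat. mi_deg \<mu> \<ge> 1} = UNIV - {\<lambda>_. 0}"
      using mi_deg_pos by fastforce
    have eb: "exp \<bar>w$i\<bar> \<le> 1 + 2*r0" for i
    proof -
      have "exp \<bar>w$i\<bar> \<le> 1 + 2 * \<bar>w$i\<bar>"
        using exp_bound_lemma[of "\<bar>w$i\<bar>"] w[rule_format, of i] by simp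
      then show ?thesis using wr[of i] by linarith
    qed
    have sb: "(\<Sum>i\<in>UNIV. pz z0 i * exp \<bar>w$i\<bar>) \<le> 1 + 2*r0"
    proof -
      have "(\<Sum>i\<in>UNIV. pz z0 i * exp \<bar>w$i\<bar>) \<le> (\<Sum>i\<in>UNIV. pz z0 i * (1 + 2*r0))"
        by (rule sum_mono, rule mult_left_mono[OF eb less_imp_le[OF pz_pos]])
      also have "\<dots> = 1 + 2*r0" by (simp add: sum_distrib_right[symmetric] pz_sum)
      finally show ?thesis .
    qed
    have "Bv - pz z0 j \<le> 1" unfolding Bv_def
      by (rule numeric_bound[OF pz_pos pz_le1 _ eb sb r0(1)[THEN less_imp_le] r0(2)]) simp
    then have "infsum g (UNIV - {\<lambda>_. 0}) \<le> 1" using tot split by linarith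
    then show ?thesis using sg unfolding seteq g_def w_def by simp
  qed
  show ?thesis
    unfolding has_analytic_type_def real_analytic_on_vec_def
  proof (intro conjI ballI allI impI)
    fix z0 :: "real^'n"
    show "\<exists>a. power_series_at (\<lambda>z. smax z j) z0 a" using ps by blast
  next
    fix z0 z :: "real^'n" and a
    assume psa: "power_series_at (\<lambda>z. smax z j) z0 a"
      and zb: "\<forall>i. \<bar>z$i - z0$i\<bar> \<le> 1 / (2 * exp 2)"
    have aeq: "a = Ac z0 j" by (rule uq[OF psa])
    have "\<forall>i. \<bar>z$i - z0$i\<bar> \<le> r0" using zb by (simp add: r0_def)
    note b = bound[OF this]
    show "(\<lambda>\<mu>. \<bar>a \<mu>\<bar> * \<bar>mono_pow (z - z0) \<mu>\<bar>) summable_on UNIV"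
      using b aeq by simp
    show "(\<Sum>\<^sub>\<infinity>\<mu>\<in>{\<mu>. 1 \<le> mi_deg \<mu>}. \<bar>a \<mu>\<bar> * \<bar>mono_pow (z - z0) \<mu>\<bar>) \<le> 1"
      using b aeq by simp
  qed
qed

end
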